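(* As $k\to\infty$, $f(k)=\frac{k^2}{3}\bigl(1+o(1)\bigr)$.
   Context: A $k$-colouring of the edges of the complete graph $K_n$ (colours from $[k]=\{1,\dots,k\}$) is called connected if for each colour $i\in[k]$ the edges of colour $i$ form a connected spanning subgraph of $K_n$. A triangle is multicoloured if its three edges have three distinct colours; its colour set is the set of these three colours. $f(k)$ denotes the minimum, over all $n$ and all connected $k$-colourings of $K_n$, of the number of distinct $3$-sets of colours that occur as colour sets of multicoloured triangles. *)

theory Defs
  imports Main "HOL-Library.Landau_Symbols"
begin

definition colouring :: "nat \<Rightarrow> nat \<Rightarrow> (nat \<Rightarrow> nat \<Rightarrow> nat) \<Rightarrow> bool" where
  "colouring k n c \<longleftrightarrow>
     (\<forall>x<n. \<forall>y<n. x \<noteq> y \<longrightarrow> c x y = c y x \<and> c x y \<in> {1..k})"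

definition colour_edge :: "nat \<Rightarrow> (nat \<Rightarrow> nat \<Rightarrow> nat) \<Rightarrow> nat \<Rightarrow> nat \<Rightarrow> nat \<Rightarrow> bool" where
  "colour_edge n c i x y \<longleftrightarrow> x < n \<and> y < n \<and> x \<noteq> y \<and> c x y = i"

definition connected_colouring :: "nat \<Rightarrow> nat \<Rightarrow> (nat \<Rightarrow> nat \<Rightarrow> nat) \<Rightarrow> bool" where
  "connected_colouring k n c \<longleftrightarrow> colouring k n c \<and>
     (\<forall>i\<in>{1..k}. \<forall>u<n. \<forall>v<n. (colour_edge n c i)\<^sup>*\<^sup>* u v)"

definition triangle_colour_sets :: "nat \<Rightarrow> (nat \<Rightarrow> nat \<Rightarrow> nat) \<Rightarrow> nat set set" where
  "triangle_colour_sets n c =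
     {{c a b, c b d, c a d} | a b d. a < n \<and> b < n \<and> d < n \<and> a \<noteq> b \<and> b \<noteq> d \<and> a \<noteq> d
        \<and> card {c a b, c b d, c a d} = 3}"

definition f :: "nat \<Rightarrow> nat" where
  "f k = Inf {card (triangle_colour_sets n c) | n c. 2 \<le> n \<and> connected_colouring k n c}"

end

theory Submission
  imports Defs "HOL-Number_Theory.Number_Theory"
begin

definition tedge :: "nat set \<Rightarrow> (nat\<Rightarrow>nat\<Rightarrow>nat) \<Rightarrow> nat \<Rightarrow> nat \<Rightarrow> nat \<Rightarrow> bool" where
  "tedge V t j x y \<longleftrightarrow> x\<in>V \<and> y\<in>V \<and> x\<noteq>y \<and> t x y = j"

lemma tedge_rtranclp_sym:
  assumes sym: "\<And>x y. x\<in>V \<Longrightarrow> y\<in>V \<Longrightarrow> x\<noteq>y \<Longrightarrow> t x y = t y x"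
    and "(tedge V t j)\<^sup>*\<^sup>* x y"
  shows "(tedge V t j)\<^sup>*\<^sup>* y x"
proof -
  have "symp (tedge V t j)" unfolding symp_def tedge_def using sym by metis
  then have "symp (tedge V t j)\<^sup>*\<^sup>*" by (rule symp_rtranclp)
  then show ?thesis using assms(2) by (meson sympD)
qed

lemma gallai3:
  fixes V :: "nat set" and t :: "nat \<Rightarrow> nat \<Rightarrow> nat"
  assumes "finite V" "card V \<ge> 2"
   and sym: "\<And>x y. x\<in>V \<Longrightarrow> y\<in>V \<Longrightarrow> x\<noteq>y \<Longrightarrow> t x y = t y x"
   and rng: "\<And>x y. x\<in>V \<Longrightarrow> y\<in>V \<Longrightarrow> x\<noteq>y \<Longrightarrow> t x y < 3"
   and nr: "\<And>x y z. x\<in>V \<Longrightarrow> y\<in>V \<Longrightarrow> z\<in>V \<Longrightarrow> x\<noteq>y \<Longrightarrow> y\<noteq>z \<Longrightarrow> x\<noteq>z \<Longrightarrow>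
              t x y = t y z \<or> t y z = t x z \<or> t x y = t x z"
  shows "\<exists>j<3. \<exists>u\<in>V. \<exists>w\<in>V. \<not> (tedge V t j)\<^sup>*\<^sup>* u w"
  using assms
proof (induction "card V" arbitrary: V rule: less_induct)
  case less
  show ?case
  proof (cases "card V = 2")
    case True
    then obtain x y where V: "V = {x,y}" "x \<noteq> y" by (auto simp: card_2_iff)
    define j where "j = (t x y + 1) mod 3"
    have txy: "t y x = t x y" using less.prems(3)[of y x] V by auto
    have jn: "j \<noteq> t x y" unfolding j_def by presburger
    have nj: "\<not> tedge V t j p q" for p q
    proof
      assume "tedge V t j p q"
      then have "p \<in> V" "q \<in> V" "p \<noteq> q" "t p q = j" unfolding tedge_def by auto
      then have "(p = x \<and> q = y) \<or> (p = y \<and> q = x)" using V by auto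
      then show False using \<open>t p q = j\<close> txy jn by auto
    qed
    have "\<not> (tedge V t j)\<^sup>*\<^sup>* x y"
    proof
      assume "(tedge V t j)\<^sup>*\<^sup>* x y"
      then show False using V(2) nj by (cases rule: converse_rtranclpE) auto
    qed
    then show ?thesis using V by (intro exI[of _ j]) (auto simp: j_def)
  next
    case False
    with less.prems have c3: "card V \<ge> 3" by auto
    then obtain v where vV: "v \<in> V" by fastforce
    define W where "W = V - {v}"
    have finW: "finite W" using less.prems W_def by auto
    have cW: "card W = card V - 1" using vV less.prems(1) W_def by auto
    have WV: "W \<subseteq> V" using W_def by auto
    have vW: "v \<notin> W" using W_def by auto
    have "\<exists>j<3. \<exists>u\<in>W. \<exists>w\<in>W. \<not> (tedge W t j)\<^sup>*\<^sup>* u w"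
      apply (rule less.hyps)
      using cW c3 finW WV less.prems by (auto simp: subset_iff)
    then obtain a x0 y0 where a: "a < 3" and x0: "x0 \<in> W" and y0: "y0 \<in> W"
      and nxy: "\<not> (tedge W t a)\<^sup>*\<^sup>* x0 y0" by blast
    show ?thesis
    proof (rule ccontr)
      assume "\<not> ?thesis"
      then have conn: "\<And>j u w. j < 3 \<Longrightarrow> u\<in>V \<Longrightarrow> w\<in>V \<Longrightarrow> (tedge V t j)\<^sup>*\<^sup>* u w" by blast
      define R where "R = (tedge W t a)\<^sup>*\<^sup>*"
      have symW: "\<And>x y. x\<in>W \<Longrightarrow> y\<in>W \<Longrightarrow> x\<noteq>y \<Longrightarrow> t x y = t y x" using WV less.prems(3) by auto
      have Rsym: "R x y \<Longrightarrow> R y x" for x y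
        unfolding R_def by (rule tedge_rtranclp_sym[OF symW])
      have Rtr: "R x y \<Longrightarrow> R y z \<Longrightarrow> R x z" for x y z unfolding R_def by auto
      have Rrefl: "R x x" for x unfolding R_def by auto
      have Redge: "x\<in>W \<Longrightarrow> y\<in>W \<Longrightarrow> x\<noteq>y \<Longrightarrow> t x y = a \<Longrightarrow> R x y" for x y
        unfolding R_def tedge_def by (simp add: r_into_rtranclp)
      have F1: "t x' z = t x z" if "R x x'" "x\<in>W" "z\<in>W" "\<not> R x z" for x x' z
        using that(1)[unfolded R_def]
      proof (induction rule: rtranclp_induct)
        case base then show ?case by simp
      next
        case (step y x')
        have e: "y\<in>W" "x'\<in>W" "y\<noteq>x'" "t y x' = a" using step.hyps(2) unfolding tedge_def by auto
        have Rxy: "R x y" using step.hyps(1) R_def by simp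
        have Rxx': "R x x'" using Rxy Redge[OF e] Rtr by blast
        have yz: "y \<noteq> z" using Rxy that(4) by auto
        have x'z: "x' \<noteq> z" using Rxx' that(4) by auto
        have tyz: "t y z \<noteq> a" using Redge[OF e(1) that(3) yz] Rxy Rtr that(4) by blast
        have tx'z: "t x' z \<noteq> a" using Redge[OF e(2) that(3) x'z] Rxx' Rtr that(4) by blast
        have "t y x' = t x' z \<or> t x' z = t y z \<or> t y x' = t y z"
          using less.prems(5)[of y x' z] e WV that(3) yz x'z by auto
        then show ?case using step.IH e(4) tyz tx'z by auto
      qed
      have F2: "\<exists>u\<in>W. R z u \<and> t v u = a" if "z\<in>W" "y\<in>W" "\<not> R z y" for z y
      proof (rule ccontr)
        assume H: "\<not> (\<exists>u\<in>W. R z u \<and> t v u = a)"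
        have "(tedge V t a)\<^sup>*\<^sup>* z y" using conn a that WV by auto
        then have "y \<in> W \<and> R z y"
        proof (induction rule: rtranclp_induct)
          case base then show ?case using that Rrefl by auto
        next
          case (step w w')
          have e: "w\<in>V" "w'\<in>V" "w\<noteq>w'" "t w w' = a" using step.hyps(2) unfolding tedge_def by auto
          show ?case
          proof (cases "w' = v")
            case True
            then have "t v w = a" using e less.prems(3) by metis
            then show ?thesis using H step.IH by blast
          next
            case False
            then have "w' \<in> W" using e W_def by auto
            then show ?thesis using step.IH Redge[OF _ _ e(3) e(4)] Rtr by blast
          qed
        qed
        then show False using that by auto
      qed
      have F3: "\<exists>z\<in>W. t v z = e" if "e < 3" for e
      proof -
        obtain w where w: "w \<in> W" using x0 by blast
        have "(tedge V t e)\<^sup>*\<^sup>* v w" using conn that vV w WV by auto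
        moreover have "v \<noteq> w" using w vW by auto
        ultimately obtain z where "tedge V t e v z"
          by (cases rule: converse_rtranclpE) auto
        then show ?thesis unfolding tedge_def W_def by auto
      qed
      have F4: "t u z = e" if "z\<in>W" "u\<in>W" "t v z = e" "e \<noteq> a" "t v u = a" "\<not> R u z" for z u e
      proof -
        have uz: "u \<noteq> z" using that(6) Rrefl by auto
        have "t u z \<noteq> a" using Redge[OF that(2) that(1) uz] that(6) by auto
        moreover have "t v u = t u z \<or> t u z = t v z \<or> t v u = t v z"
          using less.prems(5)[of v u z] that vV WV vW uz by auto
        ultimately show ?thesis using that by auto
      qed
      have F5: "\<exists>y\<in>W. \<not> R z y" if "z \<in> W" for z
      proof (rule ccontr)
        assume "\<not> ?thesis"
        then have "R z x0" "R z y0" using x0 y0 by auto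
        then have "R x0 y0" using Rsym Rtr by blast
        then show False using nxy R_def by simp
      qed
      define b where "b = (if a = 0 then 1 else (0::nat))"
      define d where "d = (if a = 2 then 1 else (2::nat))"
      have bd: "b < 3" "d < 3" "b \<noteq> a" "d \<noteq> a" "b \<noteq> d" proof -
        have "a = 0 \<or> a = 1 \<or> a = 2" using a by auto
        then show "b < 3" "d < 3" "b \<noteq> a" "d \<noteq> a" "b \<noteq> d" unfolding b_def d_def by auto
      qed
      obtain zb where zb: "zb \<in> W" "t v zb = b" using F3 bd by blast
      obtain zd where zd: "zd \<in> W" "t v zd = d" using F3 bd by blast
      have sym': "t x y = t y x" if "x\<in>W" "y\<in>W" "x\<noteq>y" for x y using symW that by auto
      show False
      proof (cases "R zb zd")
        case True
        obtain y where y: "y\<in>W" "\<not> R zb y" using F5 zb by blast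
        obtain u where u: "u\<in>W" "R y u" "t v u = a" using F2[OF y(1) zb(1)] y Rsym by blast
        have n1: "\<not> R u zb" using u y Rtr Rsym by blast
        have n2: "\<not> R u zd" using n1 True Rtr Rsym by blast
        have "t u zb = b" using F4[OF zb(1) u(1) zb(2) bd(3) u(3) n1] .
        moreover have "t u zd = d" using F4[OF zd(1) u(1) zd(2) bd(4) u(3) n2] .
        moreover have "t zd u = t zb u" using F1[OF True zb(1) u(1)] n1 Rsym by blast
        moreover have "u \<noteq> zb" "u \<noteq> zd" using n1 n2 Rrefl by auto
        ultimately show False using sym' u zb zd bd by metis
      next
        case False
        obtain u where u: "u\<in>W" "R zd u" "t v u = a" using F2[OF zd(1) zb(1)] False Rsym by blast
        have n1: "\<not> R u zb" using u False Rtr Rsym by blast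
        have e1: "t u zb = b" using F4[OF zb(1) u(1) zb(2) bd(3) u(3) n1] .
        have e2: "t u zb = t zd zb" using F1[OF u(2) zd(1) zb(1)] False Rsym by blast
        obtain u' where u': "u'\<in>W" "R zb u'" "t v u' = a" using F2[OF zb(1) zd(1)] False by blast
        have n1': "\<not> R u' zd" using u' False Rtr Rsym by blast
        have e1': "t u' zd = d" using F4[OF zd(1) u'(1) zd(2) bd(4) u'(3) n1'] .
        have e2': "t u' zd = t zb zd" using F1[OF u'(2) zb(1) zd(1)] False by blast
        have "zb \<noteq> zd" using False Rrefl by auto
        then show False using e1 e2 e1' e2' sym' zb zd bd by metis
      qed
    qed
  qed
qed


lemma col_range:
  assumes "colouring k n c" "x < n" "y < n" "x \<noteq> y"
  shows "c x y \<in> {1..k}" "c x y = c y x"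
  using assms unfolding colouring_def by auto

lemma TCS_sub:
  assumes "colouring k n c"
  shows "triangle_colour_sets n c \<subseteq> Pow {1..k}"
  using assms unfolding triangle_colour_sets_def colouring_def by fastforce

lemma TCS_finite:
  assumes "colouring k n c"
  shows "finite (triangle_colour_sets n c)"
  using TCS_sub[OF assms] finite_subset by (metis finite_Pow_iff finite_atLeastAtMost)

lemma TCS_card3:
  "T \<in> triangle_colour_sets n c \<Longrightarrow> card T = 3"
  unfolding triangle_colour_sets_def by auto

lemma crossing:
  assumes cc: "connected_colouring k n c" and n2: "2 \<le> n" and i: "i \<in> {1..k}"
    and S: "S \<subseteq> {1..k} - {i}" "s \<in> S" and s': "s' \<in> {1..k} - {i} - S"
  shows "\<exists>T \<in> triangle_colour_sets n c. i \<in> T \<and> (\<exists>y. y \<in> {1..k} - {i} - S \<and> y \<in> T \<and> T \<subseteq> insert i (insert y S))"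
proof -
  have col: "colouring k n c" using cc connected_colouring_def by auto
  define V where "V = {0..<n::nat}"
  define t where "t x y = (if c x y = i then 0 else if c x y \<in> S then 1 else (2::nat))" for x y
  have conn: "(colour_edge n c j)\<^sup>*\<^sup>* u w" if "j \<in> {1..k}" "u < n" "w < n" for j u w
    using cc that unfolding connected_colouring_def by auto
  have "\<not> (\<forall>x y z. x\<in>V \<longrightarrow> y\<in>V \<longrightarrow> z\<in>V \<longrightarrow> x\<noteq>y \<longrightarrow> y\<noteq>z \<longrightarrow> x\<noteq>z \<longrightarrow>
              t x y = t y z \<or> t y z = t x z \<or> t x y = t x z)"
  proof
    assume nr: "\<forall>x y z. x\<in>V \<longrightarrow> y\<in>V \<longrightarrow> z\<in>V \<longrightarrow> x\<noteq>y \<longrightarrow> y\<noteq>z \<longrightarrow> x\<noteq>z \<longrightarrow>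
              t x y = t y z \<or> t y z = t x z \<or> t x y = t x z"
    have "\<exists>j<3. \<exists>u\<in>V. \<exists>w\<in>V. \<not> (tedge V t j)\<^sup>*\<^sup>* u w"
      apply (rule gallai3)
      using n2 nr col_range[OF col] unfolding V_def t_def by auto
    then obtain j u w where j: "j < 3" and uw: "u \<in> V" "w \<in> V" and nc: "\<not> (tedge V t j)\<^sup>*\<^sup>* u w" by blast
    obtain cj where cj: "cj \<in> {1..k}" "\<And>x y. colour_edge n c cj x y \<Longrightarrow> tedge V t j x y"
    proof -
      have "j = 0 \<or> j = 1 \<or> j = 2" using j by auto
      moreover have "colour_edge n c i x y \<Longrightarrow> tedge V t 0 x y" for x y
        unfolding colour_edge_def tedge_def V_def t_def by auto
      moreover have "colour_edge n c s x y \<Longrightarrow> tedge V t 1 x y" for x y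
        using S unfolding colour_edge_def tedge_def V_def t_def by auto
      moreover have "colour_edge n c s' x y \<Longrightarrow> tedge V t 2 x y" for x y
        using s' unfolding colour_edge_def tedge_def V_def t_def by auto
      ultimately show ?thesis using that i S s' by blast
    qed
    have "(colour_edge n c cj)\<^sup>*\<^sup>* u w" using conn[OF cj(1)] uw V_def by auto
    then have "(tedge V t j)\<^sup>*\<^sup>* u w" by (rule rtranclp_mono[THEN predicate2D, rotated]) (use cj(2) in blast)
    then show False using nc by simp
  qed
  then obtain x y z where xyz: "x<n" "y<n" "z<n" "x\<noteq>y" "y\<noteq>z" "x\<noteq>z"
    and d: "t x y \<noteq> t y z" "t y z \<noteq> t x z" "t x y \<noteq> t x z" unfolding V_def by auto
  have r: "c x y \<in> {1..k}" "c y z \<in> {1..k}" "c x z \<in> {1..k}" using col_range[OF col] xyz by auto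
  define T where "T = {c x y, c y z, c x z}"
  define y0 where "y0 = (if t x y = 2 then c x y else if t y z = 2 then c y z else c x z)"
  have dc: "c x y \<noteq> c y z" "c y z \<noteq> c x z" "c x y \<noteq> c x z" proof -
    have tt: "t p q = t p' q'" if "c p q = c p' q'" for p q p' q' unfolding t_def using that by simp
    show "c x y \<noteq> c y z" "c y z \<noteq> c x z" "c x y \<noteq> c x z" using tt d by blast+
  qed
  have "card T = 3" using dc unfolding T_def by auto
  then have TT: "T \<in> triangle_colour_sets n c"
    unfolding triangle_colour_sets_def T_def using xyz by blast
  have "i \<in> T" using d unfolding T_def t_def by (auto split: if_splits)
  moreover have "y0 \<in> {1..k} - {i} - S" "y0 \<in> T" "T \<subseteq> insert i (insert y0 S)"
    using d r unfolding T_def y0_def t_def by (auto split: if_splits)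
  ultimately show ?thesis using TT by blast
qed

lemma link_card:
  assumes cc: "connected_colouring k n c" and n2: "2 \<le> n" and i: "i \<in> {1..k}"
  shows "k - 2 \<le> card {T \<in> triangle_colour_sets n c. i \<in> T}"
proof (cases "k \<ge> 2")
  case False then show ?thesis by simp
next
  case True
  have col: "colouring k n c" using cc connected_colouring_def by auto
  define X where "X = {1..k} - {i}"
  define L where "L = {T \<in> triangle_colour_sets n c. i \<in> T}"
  have finL: "finite L" using TCS_finite[OF col] L_def by auto
  have cX: "card X = k - 1" using i X_def by auto
  have finX: "finite X" using X_def by auto
  have main: "\<exists>S F. S \<subseteq> X \<and> card S = Suc m \<and> F \<subseteq> L \<and> finite F \<and> m \<le> card F \<and> (\<forall>T\<in>F. T \<subseteq> insert i S)"
    if "Suc m \<le> k - 1" for m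
    using that
  proof (induction m)
    case 0
    have "card X > 0" using cX True by simp
    then have "X \<noteq> {}" by auto
    then obtain x0 where "x0 \<in> X" by blast
    then have "{x0} \<subseteq> X \<and> card {x0} = Suc 0 \<and> {} \<subseteq> L \<and> finite {} \<and> 0 \<le> card {} \<and> (\<forall>T\<in>{}. T \<subseteq> insert i {x0})" by simp
    then show ?case by blast
  next
    case (Suc m)
    then obtain S F where SF: "S \<subseteq> X" "card S = Suc m" "F \<subseteq> L" "finite F" "m \<le> card F" "\<forall>T\<in>F. T \<subseteq> insert i S"
      by auto
    have "card S < card X" using SF(2) Suc.prems cX by auto
    have "X - S \<noteq> {}"
    proof
      assume "X - S = {}"
      then have "X \<subseteq> S" by auto
      then have "card X \<le> card S" using SF(1) finX finite_subset card_mono by blast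
      then show False using \<open>card S < card X\<close> by simp
    qed
    then obtain s' where s': "s' \<in> X - S" by blast
    have "card S > 0" using SF(2) by simp
    then have "S \<noteq> {}" by auto
    then obtain s where s: "s \<in> S" by blast
    obtain T y where T: "T \<in> triangle_colour_sets n c" "i \<in> T" "y \<in> {1..k} - {i} - S" "y \<in> T"
      "T \<subseteq> insert i (insert y S)"
      using crossing[OF cc n2 i _ s, of s'] SF(1) s' X_def by blast
    have TF: "T \<notin> F" using SF(6) T(3,4) by auto
    have fS: "finite S" using SF(1) finX finite_subset by auto
    have y: "y \<in> X" "y \<notin> S" using T(3) X_def by auto
    have 1: "insert y S \<subseteq> X" using SF(1) y by auto
    have 2: "card (insert y S) = Suc (Suc m)" using SF(2) y fS by simp
    have 3: "insert T F \<subseteq> L" using SF(3) T(1,2) L_def by auto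
    have 4: "finite (insert T F)" using SF(4) by simp
    have 5: "Suc m \<le> card (insert T F)" using SF(4,5) TF by simp
    have 6: "\<forall>T'\<in>insert T F. T' \<subseteq> insert i (insert y S)" using SF(6) T(5) by blast
    show ?case using 1 2 3 4 5 6 by blast
  qed
  have "Suc (k - 2) \<le> k - 1" using True by simp
  from main[OF this] obtain S F where "F \<subseteq> L" "k - 2 \<le> card F" "finite F" by blast
  then show ?thesis using card_mono[OF finL] L_def by (meson le_trans)
qed

lemma double_count:
  assumes "finite A" "finite K" "\<And>T. T \<in> A \<Longrightarrow> T \<subseteq> K \<and> card T = 3"
  shows "(\<Sum>i\<in>K. card {T\<in>A. i \<in> T}) = 3 * card A"
proof -
  have "(\<Sum>i\<in>K. card {T\<in>A. i \<in> T}) = (\<Sum>i\<in>K. \<Sum>T\<in>A. if i \<in> T then 1 else 0)"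
    using assms(1) by (simp add: sum.inter_filter[symmetric])
  also have "\<dots> = (\<Sum>T\<in>A. \<Sum>i\<in>K. if i \<in> T then 1 else 0)" by (rule sum.swap)
  also have "\<dots> = (\<Sum>T\<in>A. card {i\<in>K. i \<in> T})"
    using assms(2) by (simp add: sum.inter_filter[symmetric])
  also have "\<dots> = (\<Sum>T\<in>A. 3)"
  proof (rule sum.cong)
    fix T assume "T \<in> A"
    then have "{i\<in>K. i \<in> T} = T" using assms(3) by auto
    then show "card {i\<in>K. i \<in> T} = 3" using assms(3) \<open>T\<in>A\<close> by simp
  qed simp
  finally show ?thesis by simp
qed

lemma lower_bound:
  assumes cc: "connected_colouring k n c" and n2: "2 \<le> n"
  shows "k * (k - 2) \<le> 3 * card (triangle_colour_sets n c)"
proof -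
  have col: "colouring k n c" using cc connected_colouring_def by auto
  have "k * (k - 2) = (\<Sum>i\<in>{1..k}. k - 2)" by simp
  also have "\<dots> \<le> (\<Sum>i\<in>{1..k}. card {T \<in> triangle_colour_sets n c. i \<in> T})"
    by (rule sum_mono) (use link_card[OF cc n2] in auto)
  also have "\<dots> = 3 * card (triangle_colour_sets n c)"
    by (rule double_count) (use TCS_finite[OF col] TCS_sub[OF col] TCS_card3 in auto)
  finally show ?thesis .
qed

definition cdist :: "nat \<Rightarrow> nat \<Rightarrow> nat \<Rightarrow> nat" where
  "cdist n x y = min ((x + n - y) mod n) ((y + n - x) mod n)"

lemma cdist_sym: "cdist n x y = cdist n y x"
  unfolding cdist_def by simp

lemma cdist_lt: assumes "x < y" "y < n" shows "cdist n x y = min (y - x) (n - (y - x))"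
proof -
  have "x + n - y < n" using assms by simp
  then have "(x + n - y) mod n = x + n - y" by simp
  moreover have "x + n - y = n - (y - x)" using assms by simp
  ultimately have "(x + n - y) mod n = n - (y - x)" by simp
  moreover have "(y + n - x) mod n = y - x"
  proof -
    have "y + n - x = (y - x) + n" using assms by simp
    then have "(y + n - x) mod n = ((y - x) + n) mod n" by simp
    also have "\<dots> = (y - x) mod n" by simp
    also have "\<dots> = y - x" using assms by simp
    finally show ?thesis .
  qed
  ultimately show ?thesis unfolding cdist_def by (simp add: min.commute)
qed

lemma cdist_range: assumes "x < n" "y < n" "x \<noteq> y"
  shows "1 \<le> cdist n x y \<and> cdist n x y \<le> n div 2"
proof (cases "x < y")
  case True then show ?thesis using cdist_lt[OF True assms(2)] assms by (simp add: min_def; linarith)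
next
  case False then have "y < x" using assms by simp
  then show ?thesis using cdist_lt[OF \<open>y<x\<close> assms(1)] cdist_sym[of n x y] assms by (simp add: min_def; linarith)
qed

lemma rel_arith:
  fixes e1 e2 n :: nat
  assumes "e1 + e2 < n"
  defines "d1 \<equiv> min e1 (n - e1)" and "d2 \<equiv> min e2 (n - e2)" and "d3 \<equiv> min (e1+e2) (n - (e1+e2))"
  shows "d1 + d2 = d3 \<or> d1 + d3 = d2 \<or> d2 + d3 = d1 \<or> d1 + d2 + d3 = n"
proof -
  consider "e1 \<le> n - e1" "e2 \<le> n - e2" "e1+e2 \<le> n - (e1+e2)"
    | "e1 \<le> n - e1" "e2 \<le> n - e2" "\<not> e1+e2 \<le> n - (e1+e2)"
    | "\<not> e1 \<le> n - e1" | "\<not> e2 \<le> n - e2" by blast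
  then show ?thesis
  proof cases
    case 1 then have "d1 = e1" "d2 = e2" "d3 = e1+e2" unfolding d1_def d2_def d3_def by auto
    then show ?thesis by simp
  next
    case 2 then have "d1 = e1" "d2 = e2" "d3 = n - (e1+e2)" unfolding d1_def d2_def d3_def by auto
    then show ?thesis using assms(1) by simp
  next
    case 3 then have "d1 = n - e1" "d2 = e2" "d3 = n - (e1+e2)" unfolding d1_def d2_def d3_def using assms(1) by auto
    then show ?thesis using assms(1) by simp
  next
    case 4 then have "d1 = e1" "d2 = n - e2" "d3 = n - (e1+e2)" unfolding d1_def d2_def d3_def using assms(1) by auto
    then show ?thesis using assms(1) by simp
  qed
qed

lemma rel_ord: assumes "x < y" "y < z" "z < n"
  shows "cdist n x y + cdist n y z = cdist n x z \<or> cdist n x y + cdist n x z = cdist n y z \<or>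
         cdist n y z + cdist n x z = cdist n x y \<or> cdist n x y + cdist n y z + cdist n x z = n"
proof -
  have e: "z - x = (y - x) + (z - y)" "(y - x) + (z - y) < n" using assms by auto
  have h1: "cdist n x y = min (y - x) (n - (y - x))" using cdist_lt[of x y n] assms by simp
  have h2: "cdist n y z = min (z - y) (n - (z - y))" using cdist_lt[of y z n] assms by simp
  have h3': "cdist n x z = min (z - x) (n - (z - x))" using cdist_lt[of x z n] assms by simp
  have h3: "cdist n x z = min ((y - x) + (z - y)) (n - ((y - x) + (z - y)))"
    using h3' by (simp only: e(1))
  show ?thesis unfolding h1 h2 h3 by (rule rel_arith[OF e(2)])
qed

lemma rel_any: assumes "x < n" "y < n" "z < n" "x \<noteq> y" "y \<noteq> z" "x \<noteq> z"
  shows "cdist n x y + cdist n y z = cdist n x z \<or> cdist n x y + cdist n x z = cdist n y z \<or>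
         cdist n y z + cdist n x z = cdist n x y \<or> cdist n x y + cdist n y z + cdist n x z = n"
proof -
  consider "x<y" "y<z" | "x<z" "z<y" | "y<x" "x<z" | "y<z" "z<x" | "z<x" "x<y" | "z<y" "y<x"
    using assms by linarith
  then show ?thesis
  proof cases
    case 1 then show ?thesis using rel_ord[of x y z n] assms by auto
  next
    case 2 then show ?thesis using rel_ord[of x z y n] assms cdist_sym[of n z y] by (simp add: ac_simps)
  next
    case 3 then show ?thesis using rel_ord[of y x z n] assms cdist_sym[of n y x] by (simp add: ac_simps)
  next
    case 4 then show ?thesis using rel_ord[of y z x n] assms cdist_sym[of n y x] cdist_sym[of n z x] by (simp add: ac_simps)
  next
    case 5 then show ?thesis using rel_ord[of z x y n] assms cdist_sym[of n z x] cdist_sym[of n z y] by (simp add: ac_simps)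
  next
    case 6 then show ?thesis using rel_ord[of z y x n] assms cdist_sym[of n z y] cdist_sym[of n y x] cdist_sym[of n z x] by (simp add: ac_simps)
  qed
qed


definition Dset :: "nat \<Rightarrow> (nat \<times> nat \<times> nat) set" where
  "Dset n = {(p,q,r). 1 \<le> p \<and> p < q \<and> q < r \<and> r \<le> n div 2 \<and> (p+q = r \<or> p+q+r = n)}"

lemma sort3:
  assumes "p1 \<noteq> q1" "q1 \<noteq> r1" "p1 \<noteq> r1" "1 \<le> p1" "1 \<le> q1" "1 \<le> r1"
    "p1 \<le> n div 2" "q1 \<le> n div 2" "r1 \<le> n div 2"
    "p1 + q1 = r1 \<or> p1 + r1 = q1 \<or> q1 + r1 = p1 \<or> p1 + q1 + r1 = n"
  shows "\<exists>p q r. (p,q,r) \<in> Dset n \<and> {p,q,r} = {p1,q1,r1}"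
proof -
  consider "p1<q1" "q1<r1" | "p1<r1" "r1<q1" | "q1<p1" "p1<r1" | "q1<r1" "r1<p1" | "r1<p1" "p1<q1" | "r1<q1" "q1<p1"
    using assms by linarith
  then show ?thesis
  proof cases
    case 1 then have "(p1,q1,r1) \<in> Dset n" using assms unfolding Dset_def by auto
    then show ?thesis by blast
  next
    case 2 then have "(p1,r1,q1) \<in> Dset n" using assms unfolding Dset_def by auto
    then show ?thesis by blast
  next
    case 3 then have "(q1,p1,r1) \<in> Dset n" using assms unfolding Dset_def by auto
    then show ?thesis by blast
  next
    case 4 then have "(q1,r1,p1) \<in> Dset n" using assms unfolding Dset_def by auto
    then show ?thesis by blast
  next
    case 5 then have "(r1,p1,q1) \<in> Dset n" using assms unfolding Dset_def by auto
    then show ?thesis by blast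
  next
    case 6 then have "(r1,q1,p1) \<in> Dset n" using assms unfolding Dset_def by auto
    then show ?thesis by blast
  qed
qed

lemma tcs_sub:
  "triangle_colour_sets n (\<lambda>x y. col (cdist n x y)) \<subseteq> (\<lambda>(p,q,r). col ` {p,q,r}) ` Dset n"
proof
  fix T assume "T \<in> triangle_colour_sets n (\<lambda>x y. col (cdist n x y))"
  then obtain a b d where abd: "a < n" "b < n" "d < n" "a \<noteq> b" "b \<noteq> d" "a \<noteq> d"
    and T: "T = {col (cdist n a b), col (cdist n b d), col (cdist n a d)}" and c3: "card T = 3"
    unfolding triangle_colour_sets_def by blast
  have dc: "col (cdist n a b) \<noteq> col (cdist n b d)" "col (cdist n b d) \<noteq> col (cdist n a d)"
    "col (cdist n a b) \<noteq> col (cdist n a d)" using c3 T by (auto simp: card_insert_if split: if_splits)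
  have dd: "cdist n a b \<noteq> cdist n b d" "cdist n b d \<noteq> cdist n a d" "cdist n a b \<noteq> cdist n a d"
    using dc by auto
  have r1: "1 \<le> cdist n a b \<and> cdist n a b \<le> n div 2" using cdist_range abd by auto
  have r2: "1 \<le> cdist n b d \<and> cdist n b d \<le> n div 2" using cdist_range abd by auto
  have r3: "1 \<le> cdist n a d \<and> cdist n a d \<le> n div 2" using cdist_range abd by auto
  obtain p q r where pqr: "(p,q,r) \<in> Dset n" "{p,q,r} = {cdist n a b, cdist n b d, cdist n a d}"
    using sort3[OF dd(1) dd(2) dd(3)] r1 r2 r3 rel_any[OF abd] by blast
  have "T = col ` {p,q,r}" unfolding T pqr(2) by simp
  then show "T \<in> (\<lambda>(p,q,r). col ` {p,q,r}) ` Dset n" using pqr(1) by force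
qed

lemma cardA: "card {(p,q). 1 \<le> p \<and> p < q \<and> q < r \<and> p + q = (r::nat)} \<le> (r - 1) div 2"
proof -
  let ?A = "{(p,q). 1 \<le> p \<and> p < q \<and> q < r \<and> p + q = r}"
  have "inj_on fst ?A" by (auto simp: inj_on_def)
  moreover have "fst ` ?A \<subseteq> {1..(r-1) div 2}" by auto
  ultimately have "card ?A \<le> card {1..(r-1) div 2}" by (rule card_inj_on_le) simp
  then show ?thesis by simp
qed

lemma cardB: "card {(p,q). 1 \<le> p \<and> p < q \<and> q < r \<and> p + q + r = (n::nat)} \<le> r - ((n - r) div 2 + 1)"
proof -
  let ?B = "{(p,q). 1 \<le> p \<and> p < q \<and> q < r \<and> p + q + r = n}"
  have "inj_on snd ?B" by (auto simp: inj_on_def)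
  moreover have "snd ` ?B \<subseteq> {(n - r) div 2 + 1..<r}" by auto
  ultimately have "card ?B \<le> card {(n - r) div 2 + 1..<r}" by (rule card_inj_on_le) simp
  then show ?thesis by simp
qed

lemma sumA: "4 * (\<Sum>r\<in>{1..m}. (r - 1) div 2) \<le> (m::nat)^2"
proof (induction m)
  case 0 then show ?case by simp
next
  case (Suc m)
  have "4 * (\<Sum>r\<in>{1..Suc m}. (r - 1) div 2) = 4 * (\<Sum>r\<in>{1..m}. (r - 1) div 2) + 4 * (m div 2)"
    by simp
  also have "\<dots> \<le> m^2 + 2 * m" using Suc by linarith
  also have "\<dots> \<le> (Suc m)^2" by (simp add: power2_eq_square)
  finally show ?case .
qed

lemma sumB: "12 * (\<Sum>r\<in>{1..m}. r - ((n - r) div 2 + 1)) \<le> (3*m + 3 - (n::nat))^2"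
proof (induction m)
  case 0 then show ?case by simp
next
  case (Suc m)
  define t where "t = Suc m - ((n - Suc m) div 2 + 1)"
  have "12 * (\<Sum>r\<in>{1..Suc m}. r - ((n - r) div 2 + 1)) = 12 * (\<Sum>r\<in>{1..m}. r - ((n - r) div 2 + 1)) + 12 * t"
    by (simp add: t_def)
  also have "\<dots> \<le> (3*m + 3 - n)^2 + 12 * t" using Suc by linarith
  also have "\<dots> \<le> (3 * Suc m + 3 - n)^2"
  proof (cases "3*m + 3 \<le> n")
    case True
    then have "t = 0" unfolding t_def by linarith
    then show ?thesis using True by simp
  next
    case False
    define x where "x = 3*m + 3 - n"
    have x1: "x \<ge> 1" using False x_def by simp
    have x2: "3 * Suc m + 3 - n = x + 3" using False x_def by simp
    have "2 * t + 1 \<le> x" unfolding t_def x_def using False by linarith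
    then have "(3*m + 3 - n)^2 + 12 * t \<le> x^2 + 6 * x + 9" unfolding x_def by simp
    also have "\<dots> = (x + 3)^2" by (simp add: power2_eq_square algebra_simps)
    finally show ?thesis using x2 by simp
  qed
  finally show ?case .
qed

lemma cardD: assumes "odd n" shows "12 * card (Dset n) \<le> n^2 + 3"
proof -
  define M where "M = n div 2"
  have nM: "n = 2*M + 1" using assms M_def by simp
  define A where "A r = {(p,q). 1 \<le> p \<and> p < q \<and> q < r \<and> p + q = (r::nat)}" for r
  define B where "B r = {(p,q). 1 \<le> p \<and> p < q \<and> q < r \<and> p + q + r = n}" for r
  have finA: "finite (A r)" for r
    by (rule finite_subset[of _ "{..r} \<times> {..r}"]) (auto simp: A_def)
  have finB: "finite (B r)" for r
    by (rule finite_subset[of _ "{..r} \<times> {..r}"]) (auto simp: B_def)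
  have sub: "Dset n \<subseteq> (\<Union>r\<in>{1..M}. (\<lambda>(p,q). (p,q,r)) ` (A r \<union> B r))"
    unfolding Dset_def A_def B_def M_def by force
  have "card (Dset n) \<le> card (\<Union>r\<in>{1..M}. (\<lambda>(p,q). (p,q,r)) ` (A r \<union> B r))"
    by (rule card_mono[OF _ sub]) (use finA finB in auto)
  also have "\<dots> \<le> (\<Sum>r\<in>{1..M}. card ((\<lambda>(p,q). (p,q,r)) ` (A r \<union> B r)))"
    by (rule card_UN_le) simp
  also have "\<dots> \<le> (\<Sum>r\<in>{1..M}. card (A r) + card (B r))"
  proof (rule sum_mono)
    fix r
    have "card ((\<lambda>(p,q). (p,q,r)) ` (A r \<union> B r)) \<le> card (A r \<union> B r)" by (rule card_image_le) (use finA finB in auto)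
    also have "\<dots> \<le> card (A r) + card (B r)" by (rule card_Un_le)
    finally show "card ((\<lambda>(p,q). (p,q,r)) ` (A r \<union> B r)) \<le> card (A r) + card (B r)" .
  qed
  also have "\<dots> \<le> (\<Sum>r\<in>{1..M}. (r - 1) div 2 + (r - ((n - r) div 2 + 1)))"
    by (rule sum_mono) (use cardA cardB in \<open>auto simp: A_def B_def intro: add_mono\<close>)
  also have "\<dots> = (\<Sum>r\<in>{1..M}. (r - 1) div 2) + (\<Sum>r\<in>{1..M}. r - ((n - r) div 2 + 1))"
    by (rule sum.distrib)
  finally have c: "card (Dset n) \<le> (\<Sum>r\<in>{1..M}. (r - 1) div 2) + (\<Sum>r\<in>{1..M}. r - ((n - r) div 2 + 1))" .
  have "12 * card (Dset n) \<le> 3 * M^2 + (3*M + 3 - n)^2"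
    using c sumA[of M] sumB[where m=M and n=n] by linarith
  also have "3*M + 3 - n = M + 2" using nM by simp
  finally show ?thesis using nM by (simp add: power2_eq_square algebra_simps)
qed

lemma tcs_card:
  assumes "odd n"
  shows "12 * card (triangle_colour_sets n (\<lambda>x y. col (cdist n x y))) \<le> n^2 + 3"
proof -
  have finD: "finite (Dset n)"
    by (rule finite_subset[of _ "{..n} \<times> {..n} \<times> {..n}"]) (auto simp: Dset_def)
  have "card (triangle_colour_sets n (\<lambda>x y. col (cdist n x y))) \<le> card ((\<lambda>(p,q,r). col ` {p,q,r}) ` Dset n)"
    by (rule card_mono[OF _ tcs_sub]) (use finD in simp)
  also have "\<dots> \<le> card (Dset n)" by (rule card_image_le[OF finD])
  finally show ?thesis using cardD[OF assms] by linarith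
qed

lemma cdist_step:
  assumes "odd n" "1 \<le> u" "u \<le> n div 2" "x < n"
  shows "cdist n x ((x + u) mod n) = u"
proof (cases "x + u < n")
  case True
  then have "(x + u) mod n = x + u" by simp
  then show ?thesis using cdist_lt[of x "x+u" n] True assms by (simp add: min_def)
next
  case False
  have u: "u < n" using assms by linarith
  then have e: "(x + u) mod n = x + u - n" using False assms(4) by (simp add: mod_if)
  have "x + u - n < x" using u False by linarith
  then have "cdist n (x + u - n) x = min (x - (x + u - n)) (n - (x - (x + u - n)))"
    using cdist_lt assms(4) by blast
  also have "x - (x + u - n) = n - u" using u False by linarith
  moreover have "u < n - u" using assms(1,3) assms(3) odd_two_times_div_two_succ[OF assms(1)] assms(3,4) by linarith
  ultimately show ?thesis using e cdist_sym[of n x] by (simp add: min_def)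
qed

lemma circ_conn:
  assumes "odd n" "3 \<le> n" "1 \<le> u" "u \<le> n div 2" "coprime u n" "col u = j" "x < n" "y < n"
  shows "(colour_edge n (\<lambda>x y. col (cdist n x y)) j)\<^sup>*\<^sup>* x y"
proof -
  let ?E = "colour_edge n (\<lambda>x y. col (cdist n x y)) j"
  have u: "u < n" using assms by linarith
  have step: "?E z ((z + u) mod n)" if "z < n" for z
  proof -
    have "(z + u) mod n \<noteq> z"
    proof
      assume h: "(z + u) mod n = z"
      have "cdist n z ((z + u) mod n) = u" using cdist_step assms that by blast
      then show False using h assms(3) unfolding cdist_def by simp
    qed
    moreover have "(z + u) mod n < n" using assms by simp
    ultimately show ?thesis unfolding colour_edge_def using cdist_step[OF assms(1,3,4) that] assms(6) that by simp
  qed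
  have iter: "?E\<^sup>*\<^sup>* x ((x + t*u) mod n)" for t
  proof (induction t)
    case 0 then show ?case using assms by simp
  next
    case (Suc t)
    have "((x + t*u) mod n + u) mod n = (x + t*u + u) mod n" by (rule mod_add_left_eq)
    then have "(x + Suc t * u) mod n = ((x + t*u) mod n + u) mod n" by (simp add: algebra_simps)
    moreover have "(x + t*u) mod n < n" using assms by simp
    ultimately show ?case using Suc step by (metis rtranclp.rtrancl_into_rtrancl)
  qed
  obtain v where v: "[u * v = Suc 0] (mod n)" using cong_solve_coprime_nat[OF assms(5)] by blast
  define t where "t = (y + n - x) * v"
  have "[(y + n - x) * (u * v) = (y + n - x) * Suc 0] (mod n)" by (rule cong_mult[OF cong_refl v])
  then have "[x + (y + n - x) * (u * v) = x + (y + n - x)] (mod n)" by (simp add: cong_add_lcancel_nat)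
  moreover have "x + (y + n - x) = y + n" using assms by simp
  moreover have "[y + n = y] (mod n)" by (simp add: cong_def)
  ultimately have "[x + t * u = y] (mod n)" unfolding t_def
    by (metis (no_types, lifting) cong_trans mult.assoc mult.commute)
  then have "(x + t*u) mod n = y" using assms(8) by (simp add: cong_def)
  then show ?thesis using iter by metis
qed

lemma circ_colouring:
  assumes "odd n" "3 \<le> n" "1 \<le> k" "k \<le> card {u\<in>{1..n div 2}. coprime u n}"
  shows "\<exists>c. connected_colouring k n c \<and> 12 * card (triangle_colour_sets n c) \<le> n^2 + 3"
proof -
  define U where "U = {u\<in>{1..n div 2}. coprime u n}"
  obtain U' where U': "U' \<subseteq> U" "card U' = k" using obtain_subset_with_card_n assms(4) U_def by metis
  have finU': "finite U'" using U' assms(3) card_gt_0_iff by fastforce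
  obtain e where e: "bij_betw e U' {0..<k}" using ex_bij_betw_finite_nat[OF finU'] U'(2) by metis
  define col where "col d = (if d \<in> U' then e d + 1 else 1)" for d
  define c where "c x y = col (cdist n x y)" for x y
  have colr: "col d \<in> {1..k}" for d
  proof (cases "d \<in> U'")
    case True then have "e d < k" using e bij_betwE by fastforce
    then show ?thesis using True col_def by simp
  next
    case False then show ?thesis using col_def assms(3) by simp
  qed
  have "colouring k n c" unfolding colouring_def c_def using colr cdist_sym by metis
  moreover have "(colour_edge n c j)\<^sup>*\<^sup>* x y" if "j \<in> {1..k}" "x < n" "y < n" for j x y
  proof -
    have "j - 1 \<in> {0..<k}" using that by auto
    then obtain u where u: "u \<in> U'" "e u = j - 1" using e by (metis bij_betw_iff_bijections)
    have cu: "col u = j" using u that col_def by simp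
    have uU: "u \<in> U" using u U' by auto
    show ?thesis unfolding c_def
      by (rule circ_conn[where u=u]) (use uU U_def cu that assms in auto)
  qed
  ultimately have "connected_colouring k n c" unfolding connected_colouring_def by blast
  moreover have "12 * card (triangle_colour_sets n c) \<le> n^2 + 3"
    unfolding c_def by (rule tcs_card[OF assms(1)])
  ultimately show ?thesis by blast
qed

definition PF :: "nat \<Rightarrow> nat set" where "PF n = {q\<in>{1..n}. prime q \<and> q dvd n}"

lemma card_mult_le: "card {u\<in>{1..M}. q dvd u} \<le> M div q"
proof (cases "q = 0")
  case True then show ?thesis by simp
next
  case False
  have "inj_on (\<lambda>u. u div q) {u\<in>{1..M}. q dvd u}" by (auto simp: inj_on_def elim!: dvdE)
  moreover have "(\<lambda>u. u div q) ` {u\<in>{1..M}. q dvd u} \<subseteq> {1..M div q}"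
    using False by (auto elim!: dvdE simp: less_eq_div_iff_mult_less_eq mult.commute)
  ultimately have "card {u\<in>{1..M}. q dvd u} \<le> card {1..M div q}" by (rule card_inj_on_le) simp
  then show ?thesis by simp
qed

lemma units_lower:
  assumes "n \<ge> 1"
  shows "real M * (1 - (\<Sum>q\<in>PF n. 1 / real q)) \<le> real (card {u\<in>{1..M}. coprime u n})"
proof -
  define U where "U = {u\<in>{1..M}. coprime u n}"
  define NU where "NU = {u\<in>{1..M}. \<not> coprime u n}"
  have finPF: "finite (PF n)" unfolding PF_def by simp
  have split: "{1..M} = U \<union> NU" "U \<inter> NU = {}" unfolding U_def NU_def by auto
  have finU: "finite U" "finite NU" unfolding U_def NU_def by auto
  have "M = card {1..M}" by simp
  also have "\<dots> = card (U \<union> NU)" using split(1) by simp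
  also have "\<dots> = card U + card NU" using card_Un_disjoint[OF finU split(2)] .
  finally have cM: "M = card U + card NU" .
  have "NU \<subseteq> (\<Union>q\<in>PF n. {u\<in>{1..M}. q dvd u})"
  proof
    fix u assume "u \<in> NU"
    then have u: "u \<in> {1..M}" "\<not> coprime u n" unfolding NU_def by auto
    then have "gcd u n \<noteq> 1" using coprime_iff_gcd_eq_1 by blast
    from prime_factor_nat[OF this] obtain p where p: "prime p" "p dvd gcd u n" by blast
    then have "p dvd u" "p dvd n" by auto
    moreover have "p \<le> n" using \<open>p dvd n\<close> assms by (simp add: dvd_imp_le)
    moreover have "1 \<le> p" using p(1) prime_ge_1_nat by blast
    ultimately have "p \<in> PF n" unfolding PF_def using p(1) by auto
    then show "u \<in> (\<Union>q\<in>PF n. {u\<in>{1..M}. q dvd u})" using u \<open>p dvd u\<close> by auto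
  qed
  then have "card NU \<le> card (\<Union>q\<in>PF n. {u\<in>{1..M}. q dvd u})" by (rule card_mono[rotated]) (use finPF in auto)
  also have "\<dots> \<le> (\<Sum>q\<in>PF n. card {u\<in>{1..M}. q dvd u})" by (rule card_UN_le[OF finPF])
  finally have "real (card NU) \<le> real (\<Sum>q\<in>PF n. card {u\<in>{1..M}. q dvd u})"
    by (simp only: of_nat_le_iff)
  also have "\<dots> = (\<Sum>q\<in>PF n. real (card {u\<in>{1..M}. q dvd u}))" by (simp add: of_nat_sum)
  also have "\<dots> \<le> (\<Sum>q\<in>PF n. real M / real q)"
  proof (rule sum_mono)
    fix q assume "q \<in> PF n"
    then have "q \<ge> 1" unfolding PF_def by auto
    have "real (card {u\<in>{1..M}. q dvd u}) \<le> real (M div q)" using card_mult_le by simp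
    also have "\<dots> \<le> real M / real q" by (rule of_nat_div_le_of_nat)
    finally show "real (card {u\<in>{1..M}. q dvd u}) \<le> real M / real q" .
  qed
  also have "\<dots> = real M * (\<Sum>q\<in>PF n. 1 / real q)" by (simp add: sum_distrib_left)
  finally have "real (card NU) \<le> real M * (\<Sum>q\<in>PF n. 1 / real q)" .
  moreover have "real M = real (card U) + real (card NU)" using cM by (metis of_nat_add)
  moreover have "real M * (1 - (\<Sum>q\<in>PF n. 1 / real q)) = real M - real M * (\<Sum>q\<in>PF n. 1 / real q)"
    by (simp add: algebra_simps)
  ultimately have "real M * (1 - (\<Sum>q\<in>PF n. 1 / real q)) \<le> real (card U)" by linarith
  then show ?thesis unfolding U_def .
qed

lemma avg_exists:
  fixes g :: "nat \<Rightarrow> real"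
  assumes "s > 0" "(\<Sum>t<s. g t) \<le> real s * B"
  shows "\<exists>t<s. g t \<le> B"
proof (rule ccontr)
  assume "\<not> ?thesis"
  then have "\<And>t. t \<in> {..<s} \<Longrightarrow> B < g t" by auto
  then have "(\<Sum>t<s. B) < (\<Sum>t<s. g t)" using assms(1) by (intro sum_strict_mono) auto
  then show False using assms(2) by simp
qed

lemma sum_inv_sq:
  assumes "L \<ge> 1"
  shows "(\<Sum>q\<in>{L<..N}. 1 / (real q)^2) \<le> 1 / real L"
proof -
  have "N \<ge> L \<Longrightarrow> (\<Sum>q\<in>{L<..N}. 1 / (real q)^2) \<le> 1 / real L - 1 / real N" for N
  proof (induction N)
    case 0 then show ?case using assms by simp
  next
    case (Suc N)
    show ?case
    proof (cases "N \<ge> L")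
      case True
      have N1: "real N \<ge> 1" using True assms by simp
      have "{L<..Suc N} = insert (Suc N) {L<..N}" using True by auto
      then have "(\<Sum>q\<in>{L<..Suc N}. 1 / (real q)^2) = 1 / (real (Suc N))^2 + (\<Sum>q\<in>{L<..N}. 1 / (real q)^2)"
        by simp
      also have "\<dots> \<le> 1 / (real (Suc N))^2 + (1 / real L - 1 / real N)" using Suc.IH True by simp
      also have "\<dots> \<le> 1 / real L - 1 / real (Suc N)"
      proof -
        have e: "1 / real N - 1 / real (Suc N) = 1 / (real N * real (Suc N))"
          using N1 by (simp add: field_simps)
        have "real N * real (Suc N) \<le> (real (Suc N))^2" by (simp add: power2_eq_square)
        moreover have "0 < real N * real (Suc N)" using N1 by simp
        ultimately have "1 / (real (Suc N))^2 \<le> 1 / (real N * real (Suc N))"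
          by (intro divide_left_mono) auto
        then have "1 / (real (Suc N))^2 \<le> 1 / real N - 1 / real (Suc N)" using e by simp
        then show ?thesis by simp
      qed
      finally show ?thesis .
    next
      case False
      then have "Suc N = L" using Suc.prems by simp
      then show ?thesis by simp
    qed
  qed
  then show ?thesis
  proof (cases "N \<ge> L")
    case True
    then have "(\<Sum>q\<in>{L<..N}. 1 / (real q)^2) \<le> 1 / real L - 1 / real N"
      using \<open>\<And>N. N \<ge> L \<Longrightarrow> _\<close> by blast
    moreover have "1 / real N \<ge> 0" by simp
    ultimately show ?thesis by linarith
  next
    case False then show ?thesis by simp
  qed
qed

lemma sum_inv_le:
  assumes "R \<ge> 1"
  shows "(\<Sum>q\<in>{L<..N}. 1 / real q) \<le> real R + real N / real R"
proof -
  have "{L<..N} \<subseteq> {L<..N} \<inter> {..R} \<union> {L<..N} \<inter> {R<..}" by auto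
  have s: "(\<Sum>q\<in>{L<..N}. 1 / real q) = (\<Sum>q\<in>{L<..N} \<inter> {..R}. 1 / real q) + (\<Sum>q\<in>{L<..N} - {..R}. 1 / real q)"
    by (metis finite_greaterThanAtMost sum.Int_Diff)
  have a: "(\<Sum>q\<in>{L<..N} \<inter> {..R}. 1 / real q) \<le> (\<Sum>q\<in>{L<..N} \<inter> {..R}. 1)"
    by (rule sum_mono) auto
  also have "\<dots> \<le> real R"
  proof -
    have "card ({L<..N} \<inter> {..R}) \<le> card {1..R}"
      by (rule card_mono) auto
    then show ?thesis by simp
  qed
  finally have a': "(\<Sum>q\<in>{L<..N} \<inter> {..R}. 1 / real q) \<le> real R" .
  have "(\<Sum>q\<in>{L<..N} - {..R}. 1 / real q) \<le> (\<Sum>q\<in>{L<..N} - {..R}. 1 / real R)"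
    by (rule sum_mono) (use assms in \<open>auto simp: frac_le\<close>)
  also have "\<dots> = real (card ({L<..N} - {..R})) / real R" by simp
  also have "\<dots> \<le> real N / real R"
  proof -
    have "card ({L<..N} - {..R}) \<le> card {1..N}" by (rule card_mono) auto
    then show ?thesis by (simp add: divide_right_mono)
  qed
  finally show ?thesis using s a' by linarith
qed

lemma count_dvd_prog:
  assumes q: "prime q" "q > L" and P: "P = fact L"
  shows "card {t\<in>{..<s}. q dvd (1 + P*(B+t))} \<le> s div q + 1"
proof -
  let ?S = "{t\<in>{..<s}. q dvd (1 + P*(B+t))}"
  have ndvd: "\<not> q dvd P" using q P prime_dvd_fact_iff[of q L] by simp
  have cop: "coprime P q" using prime_imp_coprime_nat[OF q(1) ndvd] by (simp add: coprime_commute)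
  have "inj_on (\<lambda>t. t div q) ?S"
  proof (rule inj_onI)
    fix t t' assume t: "t \<in> ?S" and t': "t' \<in> ?S" and e: "t div q = t' div q"
    have "[1 + P*(B+t) = 0] (mod q)" "[1 + P*(B+t') = 0] (mod q)" using t t' by (auto simp: cong_0_iff)
    then have "[1 + P*(B+t) = 1 + P*(B+t')] (mod q)" by (meson cong_sym cong_trans)
    then have "[P*(B+t) = P*(B+t')] (mod q)" by (rule iffD1[OF cong_add_lcancel_nat])
    then have "[B+t = B+t'] (mod q)" using cong_mult_lcancel_nat[OF cop] by blast
    then have "[t = t'] (mod q)" by (simp add: cong_add_lcancel_nat)
    then have "t mod q = t' mod q" by (simp add: cong_def)
    then show "t = t'" using e by (metis div_mod_decomp)
  qed
  moreover have "(\<lambda>t. t div q) ` ?S \<subseteq> {..s div q}" by (auto intro: div_le_mono)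
  ultimately have "card ?S \<le> card {..s div q}" by (rule card_inj_on_le) simp
  then show ?thesis by simp
qed

lemma avg_prog:
  fixes L P B s N R :: nat
  assumes L: "L \<ge> 1" and P: "P = fact L" and s: "s > 0" and R: "R \<ge> 1"
    and N: "\<And>t. t < s \<Longrightarrow> 1 + P*(B+t) \<le> N"
  shows "\<exists>t<s. (\<Sum>q\<in>PF (1 + P*(B+t)). 1/real q) \<le> 1/real L + (real R + real N / real R) / real s"
proof -
  define n where "n t = 1 + P*(B+t)" for t
  define Q where "Q = {q\<in>{L<..N}. prime q}"
  have finQ: "finite Q" unfolding Q_def by simp
  have PFeq: "PF (n t) = {q\<in>Q. q dvd n t}" if "t < s" for t
  proof
    show "PF (n t) \<subseteq> {q\<in>Q. q dvd n t}"
    proof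
      fix q assume "q \<in> PF (n t)"
      then have q: "prime q" "q dvd n t" "q \<le> n t" unfolding PF_def by auto
      have "q > L"
      proof (rule ccontr)
        assume "\<not> q > L"
        then have "q dvd P" using q(1) P prime_dvd_fact_iff by auto
        then have "q dvd P*(B+t)" by simp
        then have "q dvd 1" using q(2) unfolding n_def by (metis add_diff_cancel_right' dvd_diff_nat)
        then show False using q(1) by simp
      qed
      then show "q \<in> {q\<in>Q. q dvd n t}" using q N[OF that] unfolding Q_def n_def by auto
    qed
  next
    show "{q\<in>Q. q dvd n t} \<subseteq> PF (n t)"
    proof
      fix q assume "q \<in> {q\<in>Q. q dvd n t}"
      then have q: "prime q" "q dvd n t" unfolding Q_def by auto
      have "q \<le> n t" using q(2) unfolding n_def by (simp add: dvd_imp_le)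
      moreover have "1 \<le> q" using q(1) prime_ge_1_nat by blast
      ultimately show "q \<in> PF (n t)" using q unfolding PF_def by auto
    qed
  qed
  have "(\<Sum>t<s. (\<Sum>q\<in>PF (n t). 1/real q)) = (\<Sum>t<s. (\<Sum>q\<in>Q. if q dvd n t then 1/real q else 0))"
    by (rule sum.cong) (simp_all add: PFeq sum.inter_filter[OF finQ])
  also have "\<dots> = (\<Sum>q\<in>Q. (\<Sum>t<s. if q dvd n t then 1/real q else 0))" by (rule sum.swap)
  also have "\<dots> = (\<Sum>q\<in>Q. (1/real q) * real (card {t\<in>{..<s}. q dvd n t}))"
  proof (rule sum.cong)
    fix q assume "q \<in> Q"
    have "(\<Sum>t<s. if q dvd n t then 1/real q else 0) = (\<Sum>t\<in>{t\<in>{..<s}. q dvd n t}. 1/real q)"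
      by (rule sum.inter_filter[symmetric]) simp
    also have "\<dots> = (1/real q) * real (card {t\<in>{..<s}. q dvd n t})" by simp
    finally show "(\<Sum>t<s. if q dvd n t then 1/real q else 0) = (1/real q) * real (card {t\<in>{..<s}. q dvd n t})" .
  qed simp
  also have "\<dots> \<le> (\<Sum>q\<in>Q. (1/real q) * (real s / real q + 1))"
  proof (rule sum_mono)
    fix q assume "q \<in> Q"
    then have q: "prime q" "q > L" unfolding Q_def by auto
    have "card {t\<in>{..<s}. q dvd n t} \<le> s div q + 1" unfolding n_def by (rule count_dvd_prog[OF q P])
    then have "real (card {t\<in>{..<s}. q dvd n t}) \<le> real (s div q) + 1" by simp
    also have "\<dots> \<le> real s / real q + 1" using of_nat_div_le_of_nat[of s q] by simp
    finally show "(1/real q) * real (card {t\<in>{..<s}. q dvd n t}) \<le> (1/real q) * (real s / real q + 1)"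
      by (rule mult_left_mono) simp
  qed
  also have "\<dots> \<le> (\<Sum>q\<in>{L<..N}. (1/real q) * (real s / real q + 1))"
    by (rule sum_mono2) (auto simp: Q_def)
  also have "\<dots> = (\<Sum>q\<in>{L<..N}. real s * (1 / (real q)^2) + 1 / real q)"
    by (rule sum.cong) (simp_all add: field_simps power2_eq_square)
  also have "\<dots> = real s * (\<Sum>q\<in>{L<..N}. 1 / (real q)^2) + (\<Sum>q\<in>{L<..N}. 1 / real q)"
    by (simp add: sum.distrib sum_distrib_left)
  also have "\<dots> \<le> real s * (1 / real L) + (real R + real N / real R)"
    by (intro add_mono mult_left_mono sum_inv_sq sum_inv_le) (use L R in auto)
  also have "\<dots> = real s * (1/real L + (real R + real N / real R) / real s)"
    using s by (simp add: field_simps)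
  finally have "(\<Sum>t<s. (\<Sum>q\<in>PF (n t). 1/real q)) \<le> real s * (1/real L + (real R + real N / real R) / real s)" .
  from avg_exists[OF s this] show ?thesis unfolding n_def by blast
qed

lemma real_step1:
  fixes k m P R s :: real
  assumes "m \<ge> 1" "P \<ge> 1" "R = 256 * m^2 * P" "k \<ge> 64 * m^2 * P * R" "s \<ge> k / (4*m*P)" "k > 0"
  shows "(R + 4*k/R) / s \<le> 1 / (8*m)"
proof -
  have Rp: "R > 0" using assms by simp
  have q: "k / (4*m*P) > 0" using assms by (intro divide_pos_pos) auto
  have sp: "s > 0" using q assms(5) by linarith
  have "(R + 4*k/R) / s \<le> (R + 4*k/R) / (k / (4*m*P))"
  proof (rule divide_left_mono[OF assms(5)])
    show "0 \<le> R + 4*k/R" using Rp assms by simp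
    show "0 < s * (k / (4*m*P))" using sp q by (rule mult_pos_pos)
  qed
  also have "\<dots> = 4*m*P*R/k + 16*m*P/R" using assms Rp by (simp add: field_simps)
  also have "16*m*P/R = 1/(16*m)"
  proof -
    have "16*m*P/R = 16*m*P/(256*m*m*P)" using assms(3) by (simp add: power2_eq_square)
    also have "\<dots> = 1/(16*m)" using assms(1,2) by (simp add: field_simps)
    finally show ?thesis .
  qed
  also have "4*m*P*R/k \<le> 1/(16*m)"
  proof -
    have "4*m*P*R * (16*m) = 64 * m^2 * P * R" by (simp add: power2_eq_square algebra_simps)
    then have "4*m*P*R * (16*m) \<le> k" using assms(4) by (subst \<open>4*m*P*R * (16*m) = _\<close>)
    then show ?thesis using assms by (simp add: field_simps)
  qed
  finally show ?thesis by simp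
qed

lemma real_step2:
  fixes k m M th :: real
  assumes "m \<ge> 1" "2*m*M \<ge> k*(2*m+1)" "th \<le> 1/(4*m)" "k \<ge> 0"
  shows "k \<le> M * (1 - th)"
proof -
  have "0 \<le> k*(2*m+1)" using assms by simp
  then have h0: "0 \<le> (2*m)*M" using assms(2) by linarith
  have M0: "M \<ge> 0"
  proof (rule ccontr)
    assume "\<not> M \<ge> 0"
    then have "(2*m)*M < 0" using assms(1) by (intro mult_pos_neg) auto
    then show False using h0 by linarith
  qed
  have "M * (1 - 1/(4*m)) \<le> M * (1 - th)" using assms M0 by (intro mult_left_mono) auto
  moreover have "k \<le> M * (1 - 1/(4*m))"
  proof -
    have e: "M * (1 - 1/(4*m)) = M * (4*m - 1) / (4*m)" using assms by (simp add: field_simps)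
    have a: "k * (2*m+1) * (4*m-1) \<le> 2*m*M*(4*m-1)" using assms by (intro mult_right_mono) auto
    have b: "k * (4*m) * (2*m) \<le> k * (2*m+1) * (4*m-1)"
    proof -
      have "k * (2*m+1) * (4*m-1) - k * (4*m) * (2*m) = k * (2*m - 1)" by (simp add: algebra_simps)
      moreover have "k * (2*m - 1) \<ge> 0" using assms by simp
      ultimately show ?thesis by linarith
    qed
    have "(k * (4*m)) * (2*m) \<le> (M * (4*m - 1)) * (2*m)" using a b by (simp add: algebra_simps)
    then have c: "k * (4*m) \<le> M * (4*m - 1)" by (rule mult_right_le_imp_le) (use assms(1) in simp)
    show ?thesis unfolding e using c assms(1) by (simp add: field_simps)
  qed
  ultimately show ?thesis by linarith
qed

lemma good_modulus:
  fixes m :: nat assumes m: "m \<ge> 1"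
  shows "\<exists>K. \<forall>k\<ge>K. \<exists>n. odd n \<and> 3 \<le> n \<and> k \<le> card {u\<in>{1..n div 2}. coprime u n} \<and> m * n \<le> 2 * (m+1) * k"
proof -
  define L where "L = 8*m"
  define P where "P = (fact L :: nat)"
  define R where "R = 256 * m^2 * P"
  define K where "K = 64*m^2*P*R + 4*m*P + 2*m*(P+1) + 1"
  have L1: "L \<ge> 1" using m L_def by simp
  have P1: "P \<ge> 1" using P_def by (simp add: fact_ge_1)
  have Peven: "even P" unfolding P_def using m L_def by (intro dvd_fact) auto
  have R1: "R \<ge> 1" using m P1 R_def by simp
  have mP: "m*P \<ge> 1" using m P1 by simp
  have "\<exists>n. odd n \<and> 3 \<le> n \<and> k \<le> card {u\<in>{1..n div 2}. coprime u n} \<and> m * n \<le> 2 * (m+1) * k"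
    if k: "k \<ge> K" for k
  proof -
    define B where "B = (k*(2*m+1) + m*P) div (m*P)"
    define s where "s = k div (2*m*P)"
    define N where "N = 4*k"
    have Kb: "2*m*(P+1) \<le> K" "4*m*P \<le> K" "64*m^2*P*R \<le> K" unfolding K_def by (simp_all add: algebra_simps)
    have kb: "k \<ge> 2*m*(P+1)" "k \<ge> 4*m*P" "k \<ge> 64*m^2*P*R" using k Kb by linarith+
    have B1: "m*P*B \<le> k*(2*m+1) + m*P"
      unfolding B_def using times_div_less_eq_dividend by simp
    have B2: "k*(2*m+1) < m*P*B"
    proof -
      have "(k*(2*m+1) + m*P) div (m*P) * (m*P) + (k*(2*m+1) + m*P) mod (m*P) = k*(2*m+1) + m*P"
        by (rule div_mult_mod_eq)
      moreover have "(k*(2*m+1) + m*P) mod (m*P) < m*P" using mP by simp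
      ultimately show ?thesis unfolding B_def by (simp add: mult.commute)
    qed
    have s1: "2*m*P*s \<le> k" unfolding s_def using times_div_less_eq_dividend by simp
    have s2: "k < 2*m*P*s + 2*m*P"
    proof -
      have e1: "k div (2*m*P) * (2*m*P) + k mod (2*m*P) = k" by (rule div_mult_mod_eq)
      have e2: "k mod (2*m*P) < 2*m*P" using mP by simp
      have e3: "2*m*P*s = k div (2*m*P) * (2*m*P)" unfolding s_def by simp
      show ?thesis using e1 e2 e3 by linarith
    qed
    have spos: "s > 0"
    proof (rule ccontr)
      assume "\<not> s > 0" then have "s = 0" by simp
      then show False using s2 kb(2) by simp
    qed
    have mk: "k \<le> m*k" using m by simp
    have key: "2*m*(1 + P*(B+t)) \<le> 4*(m*k) + 3*k + 2*m + 2*(m*P)" if "t < s" for t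
    proof -
      have e: "2*m*(1 + P*(B+t)) = 2*m + 2*(m*P*B) + 2*(m*P*t)" by (simp add: algebra_simps)
      have "m*P*t \<le> m*P*s" using that by simp
      moreover have "k*(2*m+1) = 2*(m*k) + k" by (simp add: algebra_simps)
      moreover have "2*m*P*s = 2*(m*P*s)" by simp
      ultimately show ?thesis using e B1 s1 by linarith
    qed
    have nt: "1 + P*(B+t) \<le> N" if "t < s" for t
    proof -
      have f1: "2*m*(P+1) = 2*m + 2*(m*P)" "2*m*(4*k) = 8*(m*k)" by (simp_all add: algebra_simps)
      have "2*m*(1 + P*(B+t)) \<le> 2*m*(4*k)" using key[OF that] kb(1) mk f1 by linarith
      then have "0 < 2*m \<longrightarrow> 1 + P*(B+t) \<le> 4*k" by (rule mult_le_cancel1[THEN iffD1])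
      then show ?thesis unfolding N_def using m by simp
    qed
    obtain t where t: "t < s" and th: "(\<Sum>q\<in>PF (1 + P*(B+t)). 1/real q) \<le> 1/real L + (real R + real N / real R) / real s"
      using avg_prog[OF L1 P_def spos R1 nt] by blast
    define n where "n = 1 + P*(B+t)"
    define th where "th = (\<Sum>q\<in>PF n. 1/real q)"
    have odd: "odd n" unfolding n_def using Peven by simp
    have PB: "P*B \<ge> 2"
    proof (rule ccontr)
      assume "\<not> P*B \<ge> 2"
      then have "P*B \<le> 1" by simp
      then have "m*(P*B) \<le> m*1" by (rule mult_le_mono2)
      then have "m*(P*B) \<le> m" by simp
      moreover have "m*P*B = m*(P*B)" by simp
      moreover have "k \<ge> 1" using kb(2) mP by linarith
      then have "k*(2*m+1) \<ge> 1*(2*m+1)" by (rule mult_le_mono1)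
      then have "k*(2*m+1) \<ge> 2*m+1" by simp
      ultimately show False using B2 by linarith
    qed
    have n3: "3 \<le> n" unfolding n_def using PB by (simp add: algebra_simps)
    have bound: "m * n \<le> 2 * (m+1) * k"
    proof -
      have "2*(m*n) = 2*m*(1 + P*(B+t))" unfolding n_def by (simp add: algebra_simps)
      then have "2*(m*n) \<le> 4*(m*k) + 3*k + 2*m + 2*(m*P)" using key[OF t] by linarith
      moreover have "2*m*(P+1) = 2*m + 2*(m*P)" "2*(2*(m+1)*k) = 4*(m*k) + 4*k" by (simp_all add: algebra_simps)
      ultimately have "2*(m*n) \<le> 2*(2*(m+1)*k)" using kb(1) by linarith
      then show ?thesis by simp
    qed
    define M where "M = n div 2"
    have M2: "2*M = P*(B+t)" unfolding M_def n_def using Peven by auto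
    have Mk: "2*m*M \<ge> k*(2*m+1)"
    proof -
      have "2*m*M = m*(2*M)" by simp
      also have "\<dots> = m*(P*(B+t))" using M2 by simp
      also have "\<dots> = m*P*B + m*P*t" by (simp add: algebra_simps)
      finally have "2*m*M = m*P*B + m*P*t" .
      then show ?thesis using B2 by linarith
    qed
    have thL: "th \<le> 1/(4 * real m)"
    proof -
      have a: "1/real L = 1/(8*real m)" unfolding L_def by simp
      have sreal: "real s \<ge> real k / (4 * real m * real P)"
      proof -
        have "real k < real (2*m*P*s + 2*m*P)" using s2 by (simp only: of_nat_less_iff)
        then have "real k < 2*real m*real P*real s + 2 * real m * real P" by simp
        moreover have "real (4*m*P) \<le> real k" using kb(2) by (simp only: of_nat_le_iff)
        then have "4 * real m * real P \<le> real k" by simp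
        ultimately have "real k \<le> (4 * real m * real P) * real s" by linarith
        moreover have "4 * real m * real P > 0" using m P1 by simp
        ultimately show ?thesis by (simp add: divide_le_eq mult.commute)
      qed
      have b: "(real R + 4 * real k / real R) / real s \<le> 1 / (8 * real m)"
      proof (rule real_step1)
        show "real R = 256 * (real m)^2 * real P" unfolding R_def by simp
        have "real (64*m^2*P*R) \<le> real k" using kb(3) by (simp only: of_nat_le_iff)
        then show "real k \<ge> 64 * (real m)^2 * real P * real R" by simp
        have "k \<ge> 1" using kb(2) mP by linarith
        then show "real k > 0" by simp
      qed (use m P1 sreal in auto)
      have "th \<le> 1/real L + (real R + real N / real R) / real s" using th unfolding th_def n_def .
      also have "real N = 4 * real k" unfolding N_def by simp
      finally show ?thesis using a b by simp
    qed
    have "real k \<le> real M * (1 - th)"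
    proof (rule real_step2)
      show "real m \<ge> 1" using m by simp
      show "2 * real m * real M \<ge> real k * (2 * real m + 1)"
      proof -
        have "real (k*(2*m+1)) \<le> real (2*m*M)" using Mk by (simp only: of_nat_le_iff)
        then show ?thesis by (simp add: algebra_simps)
      qed
    qed (use thL in auto)
    also have "\<dots> \<le> real (card {u\<in>{1..M}. coprime u n})" unfolding th_def
      by (rule units_lower) (use n3 in simp)
    finally have "k \<le> card {u\<in>{1..n div 2}. coprime u n}" unfolding M_def by simp
    then show ?thesis using odd n3 bound by blast
  qed
  then show ?thesis by blast
qed

lemma asym_core:
  fixes F :: "nat \<Rightarrow> real"
  assumes low: "\<exists>K. \<forall>k\<ge>K. real k * (real k - 2) \<le> 3 * F k"
    and up: "\<And>m::nat. m \<ge> 1 \<Longrightarrow> (\<exists>K. \<forall>k\<ge>K. 12 * (real m)^2 * F k \<le> 4*(real m + 1)^2 * (real k)^2 + 3*(real m)^2)"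
  shows "F \<sim>[at_top] (\<lambda>k. real k ^ 2 / 3)"
proof (rule asymp_equivI', rule tendstoI)
  fix e :: real assume e: "e > 0"
  obtain K1 where K1: "\<And>k. k \<ge> K1 \<Longrightarrow> real k * (real k - 2) \<le> 3 * F k" using low by blast
  define m where "m = nat \<lceil>6/e\<rceil> + 1"
  have m1: "m \<ge> 1" using m_def by simp
  have me: "real m \<ge> 6/e" using m_def by linarith
  obtain K2 where K2: "\<And>k. k \<ge> K2 \<Longrightarrow> 12 * (real m)^2 * F k \<le> 4*(real m + 1)^2 * (real k)^2 + 3*(real m)^2"
    using up[OF m1] by blast
  define K3 where "K3 = nat \<lceil>3/e\<rceil> + 3"
  show "\<forall>\<^sub>F k in at_top. dist (F k / (real k ^ 2 / 3)) 1 < e"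
    unfolding eventually_at_top_linorder
  proof (intro exI[of _ "max K1 (max K2 K3)"] allI impI)
    fix k assume k: "k \<ge> max K1 (max K2 K3)"
    have kK3: "real k \<ge> 3/e" "real k \<ge> 3" using k K3_def by linarith+
    have kpos: "real k > 0" using kK3 by simp
    define r where "r = F k / (real k ^ 2 / 3)"
    have r: "r = 3 * F k / (real k)^2" unfolding r_def by (simp add: field_simps)
    have k2: "(real k)^2 > 0" using kpos by simp
    have lo: "r \<ge> 1 - 2 / real k"
    proof -
      have "real k * (real k - 2) \<le> 3 * F k" using K1 k by simp
      then have "real k * (real k - 2) / (real k)^2 \<le> 3 * F k / (real k)^2"
        using k2 by (simp add: divide_right_mono)
      moreover have "real k * (real k - 2) / (real k)^2 = 1 - 2 / real k"
        using kpos by (simp add: field_simps power2_eq_square)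
      ultimately show ?thesis using r by simp
    qed
    have lo2: "2 / real k < e"
    proof -
      have "2 / real k < 3 / real k" using kpos by (simp add: divide_strict_right_mono)
      also have "3 / real k \<le> e" using kK3(1) e kpos by (simp add: divide_le_eq mult.commute)
      finally show ?thesis .
    qed
    have hi: "r \<le> (real m + 1)^2 / (real m)^2 + 3 / (4 * (real k)^2)"
    proof -
      have h: "12 * (real m)^2 * F k \<le> 4*(real m + 1)^2 * (real k)^2 + 3*(real m)^2" using K2 k by simp
      have mp: "(real m)^2 > 0" using m1 by simp
      have "3 * F k = (12 * (real m)^2 * F k) / (4 * (real m)^2)" using mp by (simp add: field_simps)
      also have "\<dots> \<le> (4*(real m + 1)^2 * (real k)^2 + 3*(real m)^2) / (4 * (real m)^2)"
        by (rule divide_right_mono[OF h]) (use mp in simp)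
      finally have h2: "3 * F k \<le> (4*(real m + 1)^2 * (real k)^2 + 3*(real m)^2) / (4 * (real m)^2)" .
      have "3 * F k / (real k)^2 \<le> (4*(real m + 1)^2 * (real k)^2 + 3*(real m)^2) / (4 * (real m)^2) / (real k)^2"
        by (rule divide_right_mono[OF h2]) (use k2 in simp)
      also have "\<dots> = (real m + 1)^2 / (real m)^2 + 3 / (4 * (real k)^2)"
        using mp k2 by (simp add: field_simps)
      finally show ?thesis using r by simp
    qed
    have hi2: "(real m + 1)^2 / (real m)^2 \<le> 1 + e/2"
    proof -
      have mp: "real m \<ge> 1" using m1 by simp
      have a: "(real m + 1)^2 / (real m)^2 = 1 + 2 / real m + 1 / (real m)^2"
        using mp by (simp add: field_simps power2_eq_square)
      have b: "1 / (real m)^2 \<le> 1 / real m"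
        using mp by (simp add: divide_le_eq power2_eq_square)
      have c: "3 / real m \<le> e/2"
      proof -
        have "6 \<le> e * real m" using me e by (simp add: divide_le_eq mult.commute)
        then show ?thesis using mp by (simp add: divide_le_eq)
      qed
      have d: "2 / real m + 1 / real m = 3 / real m" by (simp add: field_simps)
      show ?thesis using a b c d by linarith
    qed
    have hi3: "3 / (4 * (real k)^2) < e / 2"
    proof -
      have "(real k)^2 \<ge> real k" using kK3(2) by (simp add: power2_eq_square)
      then have "(real k)^2 \<ge> 3/e" using kK3(1) by linarith
      then have "3 \<le> e * (real k)^2" using e by (simp add: divide_le_eq mult.commute)
      then show ?thesis using k2 by (simp add: divide_less_eq)
    qed
    have "\<bar>r - 1\<bar> < e" using lo lo2 hi hi2 hi3 by linarith
    then show "dist (F k / (real k ^ 2 / 3)) 1 < e" unfolding r_def dist_real_def by simp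
  qed
qed

lemma f_le_member:
  assumes "2 \<le> n" "connected_colouring k n c"
  shows "f k \<le> card (triangle_colour_sets n c)"
  unfolding f_def
proof (rule cInf_lower)
  show "card (triangle_colour_sets n c) \<in> {card (triangle_colour_sets n c) | n c. 2 \<le> n \<and> connected_colouring k n c}"
    using assms by blast
  show "bdd_below {card (triangle_colour_sets n c) | n c. 2 \<le> n \<and> connected_colouring k n c}"
    by (rule bdd_belowI[of _ 0]) simp
qed

lemma f_lower:
  assumes "2 \<le> n" "connected_colouring k n c"
  shows "k * (k - 2) \<le> 3 * f k"
proof -
  let ?S = "{card (triangle_colour_sets n c) | n c. 2 \<le> n \<and> connected_colouring k n c}"
  have "?S \<noteq> {}" using assms by blast
  then have "Inf ?S \<in> ?S" by (rule Inf_nat_def1)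
  then obtain n' c' where "2 \<le> n'" "connected_colouring k n' c'" "f k = card (triangle_colour_sets n' c')"
    unfolding f_def by blast
  then show ?thesis using lower_bound by simp
qed

lemma f_upper:
  assumes m: "m \<ge> 1"
  shows "\<exists>K. \<forall>k\<ge>K. 12 * (real m)^2 * real (f k) \<le> 4*(real m + 1)^2 * (real k)^2 + 3*(real m)^2
              \<and> (\<exists>n c. 2 \<le> n \<and> connected_colouring k n c)"
proof -
  obtain K where K: "\<And>k. k \<ge> K \<Longrightarrow> \<exists>n. odd n \<and> 3 \<le> n \<and> k \<le> card {u\<in>{1..n div 2}. coprime u n} \<and> m * n \<le> 2 * (m+1) * k"
    using good_modulus[OF m] by blast
  have "12 * (real m)^2 * real (f k) \<le> 4*(real m + 1)^2 * (real k)^2 + 3*(real m)^2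
              \<and> (\<exists>n c. 2 \<le> n \<and> connected_colouring k n c)" if k: "k \<ge> max K 1" for k
  proof -
    obtain n where n: "odd n" "3 \<le> n" "k \<le> card {u\<in>{1..n div 2}. coprime u n}" "m * n \<le> 2 * (m+1) * k"
      using K k by force
    obtain c where c: "connected_colouring k n c" "12 * card (triangle_colour_sets n c) \<le> n^2 + 3"
      using circ_colouring[OF n(1,2) _ n(3)] k by force
    have "f k \<le> card (triangle_colour_sets n c)" using f_le_member c n by simp
    then have "12 * f k \<le> n^2 + 3" using c by linarith
    then have "real (12 * f k) \<le> real (n^2 + 3)" by (simp only: of_nat_le_iff)
    then have a: "12 * real (f k) \<le> (real n)^2 + 3" by simp
    have "real m * real n \<le> 2 * (real m + 1) * real k"
    proof -
      have "real (m * n) \<le> real (2 * (m+1) * k)" using n(4) by (simp only: of_nat_le_iff)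
      then show ?thesis by (simp add: algebra_simps)
    qed
    moreover have "0 \<le> real m * real n" by simp
    ultimately have b: "(real m * real n)^2 \<le> (2 * (real m + 1) * real k)^2" by (rule power_mono)
    have "12 * (real m)^2 * real (f k) = (real m)^2 * (12 * real (f k))" by simp
    also have "\<dots> \<le> (real m)^2 * ((real n)^2 + 3)" using a by (intro mult_left_mono) auto
    also have "\<dots> = (real m * real n)^2 + 3 * (real m)^2" by (simp add: algebra_simps power_mult_distrib)
    also have "\<dots> \<le> (2 * (real m + 1) * real k)^2 + 3 * (real m)^2" using b by simp
    also have "\<dots> = 4*(real m + 1)^2 * (real k)^2 + 3*(real m)^2" by (simp add: power_mult_distrib power2_eq_square algebra_simps)
    finally have fin: "12 * (real m)^2 * real (f k) \<le> 4*(real m + 1)^2 * (real k)^2 + 3*(real m)^2" .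
    have "\<exists>n c. 2 \<le> n \<and> connected_colouring k n c"
      using c(1) n(2) by (intro exI[of _ n] exI[of _ c]) simp
    then show ?thesis using fin by blast
  qed
  then show ?thesis by blast
qed

theorem theorem7:
  shows "(\<lambda>k. real (f k)) \<sim>[at_top] (\<lambda>k. real k ^ 2 / 3)"
proof (rule asym_core)
  show "\<And>m::nat. m \<ge> 1 \<Longrightarrow> (\<exists>K. \<forall>k\<ge>K. 12 * (real m)^2 * real (f k) \<le> 4*(real m + 1)^2 * (real k)^2 + 3*(real m)^2)"
    using f_upper by blast
  obtain K where K: "\<And>k. k \<ge> K \<Longrightarrow> (\<exists>n c. 2 \<le> n \<and> connected_colouring k n c)"
    using f_upper[of 1] by auto
  show "\<exists>K. \<forall>k\<ge>K. real k * (real k - 2) \<le> 3 * real (f k)"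
  proof (intro exI[of _ "max K 2"] allI impI)
    fix k assume k: "k \<ge> max K 2"
    then obtain n c where "2 \<le> n" "connected_colouring k n c" using K by force
    then have h: "k * (k - 2) \<le> 3 * f k" by (rule f_lower)
    have "real (k * (k - 2)) \<le> real (3 * f k)" using h by (simp only: of_nat_le_iff)
    moreover have "real (k * (k - 2)) = real k * (real k - 2)"
    proof -
      have k2: "2 \<le> k" using k by simp
      then have "real (k - 2) = real k - 2" by (simp add: of_nat_diff)
      then show ?thesis by simp
    qed
    moreover have "real (3 * f k) = 3 * real (f k)" by simp
    ultimately show "real k * (real k - 2) \<le> 3 * real (f k)" by linarith
  qed
qed

end
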